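(* Let $\sigma>0$, $\mu\in\mathbb{R}$, $\rho(x)=\frac1{\sqrt{2\pi\sigma^2}}e^{-\frac{(x-\mu)^2}{2\sigma^2}}$ and $\alpha_n=\int_\mathbb{R}\psi_n(x)\rho(x)\,\mathrm{d}x$ for $n\in\mathbb{N}\cup\{0\}$. Let $$\lambda=\begin{cases}\frac14\log\left|\frac{\sigma^2+1}{\sigma^2-1}\right|,&\text{if }\sigma^2\neq1,\\ \frac14,&\text{if }\sigma^2=1.\end{cases}$$ If $N\in\mathbb{N}$ satisfies $$N\ge\begin{cases}\frac{32\mu^2}{|\sigma^4-1|}\left(\log\left|\frac{\sigma^2+1}{\sigma^2-1}\right|\right)^{-2},&\text{if }\sigma^2\neq1,\\ \frac{e^{3/2}\mu^2}{2},&\text{if }\sigma^2=1,\end{cases}$$ then $$\left(\sum_{n=N}^\infty\alpha_n^2\right)^{1/2}\le\frac{1}{\pi^{1/4}\sqrt{(\sigma^2+1)(1-e^{-2\lambda})}}e^{-\frac{\mu^2}{2(\sigma^2+1)}-\lambda N}.$$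
   Context: $H_n$ is the $n$-th physicist's Hermite polynomial and $\psi_n(x)=\frac{1}{\sqrt{\sqrt\pi\,2^n n!}}e^{-x^2/2}H_n(x)$ are the Hermite functions. *)

theory Defs
  imports "HOL-Analysis.Analysis"
begin

fun hermite :: "nat \<Rightarrow> real \<Rightarrow> real" where
  "hermite 0 x = 1"
| "hermite (Suc 0) x = 2 * x"
| "hermite (Suc (Suc n)) x = 2 * x * hermite (Suc n) x - 2 * real (Suc n) * hermite n x"

definition hermite_fun :: "nat \<Rightarrow> real \<Rightarrow> real" where
  "hermite_fun n x = exp (- (x^2) / 2) * hermite n x / sqrt (sqrt pi * 2 ^ n * fact n)"

definition gauss_density :: "real \<Rightarrow> real \<Rightarrow> real \<Rightarrow> real" where
  "gauss_density \<sigma> \<mu> x = exp (- ((x - \<mu>)^2) / (2 * \<sigma>^2)) / sqrt (2 * pi * \<sigma>^2)"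

end

theory Submission
  imports Defs "HOL-Probability.Probability" "HOL-Real_Asymp.Real_Asymp"
begin


definition hdr :: "nat \<Rightarrow> real \<Rightarrow> real" where
  "hdr n x = (if n = 0 then 0 else 2 * real n * hermite (n - 1) x)"

lemma derivB: fixes f g :: "real \<Rightarrow> real"
  assumes IH1: "\<And>x. (f has_real_derivative F x) (at x)"
    and IH2: "\<And>x. (g has_real_derivative G x) (at x)"
  shows "((\<lambda>x. 2 * x * g x - c * f x) has_real_derivative
        (2 * g x + 2 * x * G x - c * F x)) (at x)"
  by (auto intro!: derivative_eq_intros IH1 IH2)

lemma hermite_deriv_aux:
  "(\<forall>x. (hermite n has_real_derivative hdr n x) (at x)) \<and>
   (\<forall>x. (hermite (Suc n) has_real_derivative hdr (Suc n) x) (at x))"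
proof (induction n)
  case 0
  have e1: "hermite (Suc 0) = (\<lambda>x. 2 * x :: real)" by (rule ext) simp
  have d1: "((\<lambda>x. 2 * x :: real) has_real_derivative hdr (Suc 0) x) (at x)" for x
    by (auto intro!: derivative_eq_intros simp: hdr_def)
  have e0: "hermite 0 = (\<lambda>x. 1 :: real)" by (rule ext) simp
  have d0: "((\<lambda>x. 1 :: real) has_real_derivative hdr 0 x) (at x)" for x
    by (auto intro!: derivative_eq_intros simp: hdr_def)
  show ?case unfolding e1 e0 using d1 d0 by blast
next
  case (Suc n)
  have IH1: "\<And>x. (hermite n has_real_derivative hdr n x) (at x)"
    and IH2: "\<And>x. (hermite (Suc n) has_real_derivative hdr (Suc n) x) (at x)" using Suc by auto
  have eq: "hermite (Suc (Suc n)) = (\<lambda>x. 2 * x * hermite (Suc n) x - 2 * real (Suc n) * hermite n x)"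
    by (rule ext) simp
  have "(hermite (Suc (Suc n)) has_real_derivative hdr (Suc (Suc n)) x) (at x)" for x
  proof -
    have "((\<lambda>x. 2 * x * hermite (Suc n) x - 2 * real (Suc n) * hermite n x) has_real_derivative
        (2 * hermite (Suc n) x + 2 * x * hdr (Suc n) x - 2 * real (Suc n) * hdr n x)) (at x)"
      by (rule derivB[OF IH1 IH2])
    moreover have "2 * hermite (Suc n) x + 2 * x * hdr (Suc n) x - 2 * real (Suc n) * hdr n x
        = hdr (Suc (Suc n)) x"
    proof (cases n)
      case 0 then show ?thesis by (simp add: hdr_def)
    next
      case (Suc j)
      then show ?thesis by (simp add: hdr_def algebra_simps)
    qed
    ultimately show ?thesis unfolding eq by simp
  qed
  then show ?case using IH2 by blast
qed

lemma hermite_deriv: "(hermite n has_real_derivative hdr n x) (at x)"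
  using hermite_deriv_aux by blast

lemma continuous_hermite[continuous_intros]: "continuous_on A (hermite n)"
  by (intro continuous_at_imp_continuous_on ballI DERIV_isCont[OF hermite_deriv])

lemma hermite_measurable[measurable]: "hermite n \<in> borel_measurable borel"
  by (intro borel_measurable_continuous_onI continuous_hermite)

context
  fixes m t :: real
  assumes t: "t > 0"
begin

lemma integrable_herm_aux:
  "(\<forall>k. integrable lborel (\<lambda>x. normal_density m t x * (x - m) ^ k * hermite n x)) \<and>
   (\<forall>k. integrable lborel (\<lambda>x. normal_density m t x * (x - m) ^ k * hermite (Suc n) x))"
proof (induction n)
  case 0
  have a: "integrable lborel (\<lambda>x. normal_density m t x * (x - m) ^ k * hermite 0 x)" for k
    unfolding hermite.simps mult_1_right by (rule integrable_normal_moment[OF t])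
  have i: "integrable lborel (\<lambda>x. 2 * (normal_density m t x * (x - m) ^ Suc k) + 2 * m * (normal_density m t x * (x - m) ^ k))" for k
    by (intro Bochner_Integration.integrable_add integrable_mult_right integrable_normal_moment[OF t])
  have e: "(\<lambda>x. 2 * (normal_density m t x * (x - m) ^ Suc k) + 2 * m * (normal_density m t x * (x - m) ^ k))
     = (\<lambda>x. normal_density m t x * (x - m) ^ k * hermite (Suc 0) x)" for k
    by (rule ext) (simp add: algebra_simps)
  have b: "integrable lborel (\<lambda>x. normal_density m t x * (x - m) ^ k * hermite (Suc 0) x)" for k
    using i[of k] unfolding e .
  show ?case using a b by blast
next
  case (Suc n)
  have I1: "\<And>k. integrable lborel (\<lambda>x. normal_density m t x * (x - m) ^ k * hermite n x)"
   and I2: "\<And>k. integrable lborel (\<lambda>x. normal_density m t x * (x - m) ^ k * hermite (Suc n) x)"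
    using Suc by blast+
  have i: "integrable lborel (\<lambda>x. 2 * (normal_density m t x * (x - m) ^ Suc k * hermite (Suc n) x)
     + 2 * m * (normal_density m t x * (x - m) ^ k * hermite (Suc n) x)
     - 2 * real (Suc n) * (normal_density m t x * (x - m) ^ k * hermite n x))" for k
    by (intro Bochner_Integration.integrable_add Bochner_Integration.integrable_diff integrable_mult_right I1 I2)
  have e: "(\<lambda>x. 2 * (normal_density m t x * (x - m) ^ Suc k * hermite (Suc n) x)
     + 2 * m * (normal_density m t x * (x - m) ^ k * hermite (Suc n) x)
     - 2 * real (Suc n) * (normal_density m t x * (x - m) ^ k * hermite n x))
    = (\<lambda>x. normal_density m t x * (x - m) ^ k * hermite (Suc (Suc n)) x)" for k
    by (rule ext) (simp add: algebra_simps)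
  have b: "integrable lborel (\<lambda>x. normal_density m t x * (x - m) ^ k * hermite (Suc (Suc n)) x)" for k
    using i[of k] unfolding e .
  show ?case using I2 b by blast
qed

lemma integrable_herm: "integrable lborel (\<lambda>x. normal_density m t x * (x - m) ^ k * hermite n x)"
  using integrable_herm_aux by blast

lemma integrable_herm0: "integrable lborel (\<lambda>x. normal_density m t x * hermite n x)"
  using integrable_herm[of 0 n] by simp

lemma lim_base: "((\<lambda>x. normal_density m t x * (x - m) ^ k) \<longlongrightarrow> 0) F"
  if "F = at_top \<or> F = at_bot"
proof -
  have "((\<lambda>x. 1 / sqrt (2 * pi * t\<^sup>2) * ((x - m) ^ k * exp (- ((x - m) ^ 2) / (2 * t^2)))) \<longlongrightarrow> 0) F"
    using that t by (elim disjE; hypsubst) real_asymp+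
  then show ?thesis unfolding normal_density_def by (simp add: algebra_simps)
qed

lemma lim_herm_aux:
  assumes F: "F = at_top \<or> F = at_bot"
  shows "(\<forall>k. ((\<lambda>x. normal_density m t x * (x - m) ^ k * hermite n x) \<longlongrightarrow> 0) F) \<and>
   (\<forall>k. ((\<lambda>x. normal_density m t x * (x - m) ^ k * hermite (Suc n) x) \<longlongrightarrow> 0) F)"
proof (induction n)
  case 0
  have a: "((\<lambda>x. normal_density m t x * (x - m) ^ k * hermite 0 x) \<longlongrightarrow> 0) F" for k
    using lim_base[OF F, of k] by simp
  have "((\<lambda>x. 2 * (normal_density m t x * (x - m) ^ Suc k) + 2 * m * (normal_density m t x * (x - m) ^ k)) \<longlongrightarrow> 2 * 0 + 2 * m * 0) F" for k
    by (intro tendsto_intros lim_base[OF F])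
  moreover have "(\<lambda>x. 2 * (normal_density m t x * (x - m) ^ Suc k) + 2 * m * (normal_density m t x * (x - m) ^ k))
     = (\<lambda>x. normal_density m t x * (x - m) ^ k * hermite (Suc 0) x)" for k
    by (rule ext) (simp add: algebra_simps)
  ultimately show ?case using a by auto
next
  case (Suc n)
  have I1: "\<And>k. ((\<lambda>x. normal_density m t x * (x - m) ^ k * hermite n x) \<longlongrightarrow> 0) F"
   and I2: "\<And>k. ((\<lambda>x. normal_density m t x * (x - m) ^ k * hermite (Suc n) x) \<longlongrightarrow> 0) F"
    using Suc by auto
  have "((\<lambda>x. 2 * (normal_density m t x * (x - m) ^ Suc k * hermite (Suc n) x)
     + 2 * m * (normal_density m t x * (x - m) ^ k * hermite (Suc n) x)
     - 2 * real (Suc n) * (normal_density m t x * (x - m) ^ k * hermite n x)) \<longlongrightarrow> 2 * 0 + 2 * m * 0 - 2 * real (Suc n) * 0) F" for k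
    by (intro tendsto_intros I1 I2)
  moreover have "(\<lambda>x. 2 * (normal_density m t x * (x - m) ^ Suc k * hermite (Suc n) x)
     + 2 * m * (normal_density m t x * (x - m) ^ k * hermite (Suc n) x)
     - 2 * real (Suc n) * (normal_density m t x * (x - m) ^ k * hermite n x))
    = (\<lambda>x. normal_density m t x * (x - m) ^ k * hermite (Suc (Suc n)) x)" for k
    by (rule ext) (simp add: algebra_simps)
  ultimately show ?case using I2 by auto
qed

lemma lim_herm: "((\<lambda>x. normal_density m t x * hermite n x) \<longlongrightarrow> 0) at_top"
   "((\<lambda>x. normal_density m t x * hermite n x) \<longlongrightarrow> 0) at_bot"
  using lim_herm_aux[of at_top n] lim_herm_aux[of at_bot n] by (auto dest!: spec[of _ 0])

end



context
  fixes m t :: real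
  assumes t: "t > 0"
begin

lemma dnd: "(normal_density m t has_real_derivative (- (x - m) / t\<^sup>2 * normal_density m t x)) (at x)"
proof -
  define c where "c = 1 / sqrt (2 * pi * t\<^sup>2)"
  have "((\<lambda>x. c * exp (-(x - m)\<^sup>2/ (2 * t\<^sup>2))) has_real_derivative
     c * (exp (-(x - m)\<^sup>2/ (2 * t\<^sup>2)) * (- (2 * (x - m)) / (2 * t\<^sup>2)))) (at x)"
    using t by (auto intro!: derivative_eq_intros simp: power2_eq_square field_simps)
  moreover have "c * (E * (- (2 * (x - m)) / (2 * t\<^sup>2)))
     = - (x - m) / t\<^sup>2 * (c * E)" for E
    using t by (simp add: field_simps)
  moreover have "(\<lambda>x. c * exp (-(x - m)\<^sup>2/ (2 * t\<^sup>2))) = normal_density m t"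
    by (rule ext) (simp add: normal_density_def c_def)
  ultimately show ?thesis by (metis normal_density_def c_def)
qed

lemma isCont_nd: "isCont (normal_density m t) x"
  using dnd by (rule DERIV_isCont)

lemma continuous_on_nd[continuous_intros]: "continuous_on A (normal_density m t)"
  by (intro continuous_at_imp_continuous_on ballI isCont_nd)

lemma stein:
  "(LBINT x. normal_density m t x * (x - m) * hermite (Suc n) x)
     = t\<^sup>2 * (2 * real (Suc n)) * (LBINT x. normal_density m t x * hermite n x)"
proof -
  define F where "F x = normal_density m t x * hermite (Suc n) x" for x
  define f where "f x = (2 * real (Suc n)) * (normal_density m t x * (x - m) ^ 0 * hermite n x)
     - (1 / t\<^sup>2) * (normal_density m t x * (x - m) ^ 1 * hermite (Suc n) x)" for x
  have Fd: "(F has_vector_derivative f x) (at x)" for x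
  proof -
    have "(F has_real_derivative (- (x - m) / t\<^sup>2 * normal_density m t x * hermite (Suc n) x
        + hdr (Suc n) x * normal_density m t x)) (at x)"
      unfolding F_def[abs_def] using DERIV_mult[OF dnd hermite_deriv] by simp
    moreover have "- (x - m) / t\<^sup>2 * normal_density m t x * hermite (Suc n) x
        + hdr (Suc n) x * normal_density m t x = f x"
      unfolding f_def hdr_def using t by (simp add: field_simps)
    ultimately show ?thesis by (simp add: has_real_derivative_iff_has_vector_derivative)
  qed
  have fc: "isCont f x" for x
  proof -
    have "continuous_on UNIV f" unfolding f_def by (intro continuous_intros)
    then show ?thesis using continuous_on_eq_continuous_at[of UNIV f] by auto
  qed
  have fi: "integrable lborel f"
    unfolding f_def
    by (intro Bochner_Integration.integrable_diff integrable_mult_right integrable_herm[of t m, OF t])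
  have "(LBINT x=-\<infinity>..\<infinity>. f x) = 0 - 0"
  proof (rule interval_integral_FTC_integrable[where F=F])
    show "set_integrable lborel (einterval (-\<infinity>) \<infinity>) f"
      using fi by (simp add: set_integrable_def)
    show "((F \<circ> real_of_ereal) \<longlongrightarrow> 0) (at_right (-\<infinity>))"
      unfolding ereal_tendsto_simps1 F_def using lim_herm[of t m, OF t] by simp
    show "((F \<circ> real_of_ereal) \<longlongrightarrow> 0) (at_left \<infinity>)"
      unfolding ereal_tendsto_simps1 F_def using lim_herm[of t m, OF t] by simp
  qed (use Fd fc in auto)
  then have "(LBINT x. f x) = 0"
    by (simp add: interval_lebesgue_integral_def set_lebesgue_integral_def)
  moreover have "(LBINT x. f x) = (2 * real (Suc n)) * (LBINT x. normal_density m t x * hermite n x)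
      - (1 / t\<^sup>2) * (LBINT x. normal_density m t x * (x - m) * hermite (Suc n) x)"
    unfolding f_def
    using integrable_herm[of t m 0 n, OF t] integrable_herm[of t m 1 "Suc n", OF t] by simp
  ultimately show ?thesis using t by (simp add: field_simps)
qed

definition Mi :: "nat \<Rightarrow> real" where
  "Mi n = (LBINT x. normal_density m t x * hermite n x)"

lemma Mi_0: "Mi 0 = 1"
  unfolding Mi_def using t by simp

lemma Mi_1: "Mi 1 = 2 * m"
proof -
  have "Mi 1 = (LBINT x. 2 * (normal_density m t x * x))"
    unfolding Mi_def by (simp add: ac_simps)
  also have "\<dots> = 2 * m" using integral_normal_moment_nz_1[of t m] t by simp
  finally show ?thesis .
qed

lemma Mi_rec: "Mi (Suc (Suc n)) = 2 * m * Mi (Suc n) + 2 * real (Suc n) * (2 * t\<^sup>2 - 1) * Mi n"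
proof -
  have e: "(\<lambda>x. normal_density m t x * hermite (Suc (Suc n)) x) =
     (\<lambda>x. 2 * (normal_density m t x * (x - m) ^ 1 * hermite (Suc n) x)
        + 2 * m * (normal_density m t x * (x - m) ^ 0 * hermite (Suc n) x)
        - 2 * real (Suc n) * (normal_density m t x * (x - m) ^ 0 * hermite n x))"
    by (rule ext) (simp add: algebra_simps)
  have "Mi (Suc (Suc n)) = 2 * (LBINT x. normal_density m t x * (x - m) * hermite (Suc n) x)
      + 2 * m * Mi (Suc n) - 2 * real (Suc n) * Mi n"
    unfolding Mi_def e
    using integrable_herm[of t m 0 n, OF t] integrable_herm[of t m 1 "Suc n", OF t] integrable_herm[of t m 0 "Suc n", OF t]
    by simp
  also have "\<dots> = 2 * m * Mi (Suc n) + 2 * real (Suc n) * (2 * t\<^sup>2 - 1) * Mi n"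
    unfolding stein Mi_def by (simp add: algebra_simps)
  finally show ?thesis .
qed

end



fun Mc :: "real \<Rightarrow> real \<Rightarrow> nat \<Rightarrow> real" where
  "Mc a r 0 = 1"
| "Mc a r (Suc 0) = 2 * a"
| "Mc a r (Suc (Suc n)) = 2 * a * Mc a r (Suc n) + 2 * real (Suc n) * r * Mc a r n"

fun Ek :: "real \<Rightarrow> nat \<Rightarrow> real" where
  "Ek r 0 = 1"
| "Ek r (Suc 0) = 0"
| "Ek r (Suc (Suc k)) = 2 * real (Suc k) * r * Ek r k"

lemma pascal_sum:
  fixes B :: real and g :: "nat \<Rightarrow> real"
  shows "(\<Sum>j\<le>Suc n. real (Suc n choose j) * B ^ j * g (Suc n - j))
    = (\<Sum>j\<le>n. real (n choose j) * B ^ j * g (Suc n - j)) + B * (\<Sum>j\<le>n. real (n choose j) * B ^ j * g (n - j))"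
proof -
  define X where "X j = B ^ j * g (Suc n - j)" for j
  have A1: "(\<Sum>j\<le>Suc n. real (Suc n choose j) * X j) = X 0 + (\<Sum>j\<le>n. real (Suc n choose Suc j) * X (Suc j))"
    by (subst sum.atMost_Suc_shift) simp
  have A2: "(\<Sum>j\<le>n. real (Suc n choose Suc j) * X (Suc j)) = (\<Sum>j\<le>n. real (n choose j) * X (Suc j)) + (\<Sum>j\<le>n. real (n choose Suc j) * X (Suc j))"
    by (simp add: sum.distrib algebra_simps)
  have A3: "X 0 + (\<Sum>j\<le>n. real (n choose Suc j) * X (Suc j)) = (\<Sum>j\<le>Suc n. real (n choose j) * X j)"
    by (subst sum.atMost_Suc_shift) simp
  have A4: "(\<Sum>j\<le>Suc n. real (n choose j) * X j) = (\<Sum>j\<le>n. real (n choose j) * X j)"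
    by simp
  have A5: "(\<Sum>j\<le>n. real (n choose j) * X (Suc j)) = B * (\<Sum>j\<le>n. real (n choose j) * B ^ j * g (n - j))"
    unfolding X_def sum_distrib_left by (intro sum.cong) auto
  have A0: "(\<Sum>j\<le>Suc n. real (Suc n choose j) * B ^ j * g (Suc n - j)) = (\<Sum>j\<le>Suc n. real (Suc n choose j) * X j)"
    "(\<Sum>j\<le>n. real (n choose j) * B ^ j * g (Suc n - j)) = (\<Sum>j\<le>n. real (n choose j) * X j)"
    unfolding X_def by (simp_all add: mult.assoc)
  show ?thesis unfolding A0 using A1 A2 A3 A4 A5 by linarith
qed

lemma Mc_conv: "Mc a r n = (\<Sum>j\<le>n. real (n choose j) * (2 * a) ^ j * Ek r (n - j))"
proof (induction a r n rule: Mc.induct)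
  case (1 a r) then show ?case by simp
next
  case (2 a r) then show ?case by simp
next
  case (3 a r n)
  define B where "B = 2 * a"
  define S where "S n = (\<Sum>j\<le>n. real (n choose j) * B ^ j * Ek r (n - j))" for n
  have key: "(\<Sum>j\<le>Suc n. real (Suc n choose j) * B ^ j * Ek r (Suc (Suc n) - j)) = 2 * real (Suc n) * r * S n"
  proof -
    have "(\<Sum>j\<le>Suc n. real (Suc n choose j) * B ^ j * Ek r (Suc (Suc n) - j))
       = (\<Sum>j\<le>n. real (Suc n choose j) * B ^ j * Ek r (Suc (Suc n) - j))"
      by simp
    also have "\<dots> = (\<Sum>j\<le>n. 2 * real (Suc n) * r * (real (n choose j) * B ^ j * Ek r (n - j)))"
    proof (intro sum.cong refl)
      fix j assume "j \<in> {..n}"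
      then have j: "j \<le> n" by simp
      have e: "Suc (Suc n) - j = Suc (Suc (n - j))" using j by simp
      have c: "real (Suc n choose j) * real (Suc n - j) = real (Suc n) * real (n choose j)"
        using binomial_absorb_comp[of "Suc n" j] by (metis diff_Suc_1 of_nat_mult mult.commute)
      have c2: "real (Suc (n - j)) = real (Suc n - j)" using j by (simp add: Suc_diff_le)
      have "real (Suc n choose j) * B ^ j * Ek r (Suc (Suc n) - j) =
         2 * r * B ^ j * Ek r (n - j) * (real (Suc n choose j) * real (Suc n - j))"
        unfolding e Ek.simps c2 by (simp only: mult_ac)
      also have "\<dots> = 2 * real (Suc n) * r * (real (n choose j) * B ^ j * Ek r (n - j))"
        unfolding c by (simp only: mult_ac)
      finally show "real (Suc n choose j) * B ^ j * Ek r (Suc (Suc n) - j) =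
         2 * real (Suc n) * r * (real (n choose j) * B ^ j * Ek r (n - j))" .
    qed
    also have "\<dots> = 2 * real (Suc n) * r * S n"
      unfolding S_def sum_distrib_left by simp
    finally show ?thesis .
  qed
  have "S (Suc (Suc n)) = (\<Sum>j\<le>Suc n. real (Suc n choose j) * B ^ j * Ek r (Suc (Suc n) - j)) + B * S (Suc n)"
    unfolding S_def using pascal_sum[where B=B and n="Suc n" and g="Ek r"] by simp
  also have "\<dots> = B * S (Suc n) + 2 * real (Suc n) * r * S n"
    using key by simp
  finally show ?case using 3 unfolding S_def B_def by simp
qed

lemma Ek_sq: "(Ek r k)\<^sup>2 \<le> fact k * 2 ^ k * \<bar>r\<bar> ^ k"
proof (induction r k rule: Ek.induct)
  case (1 r) then show ?case by simp
next
  case (2 r) then show ?case by simp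
next
  case (3 r k)
  have "(Ek r (Suc (Suc k)))\<^sup>2 = 4 * (real (Suc k))\<^sup>2 * \<bar>r\<bar>\<^sup>2 * (Ek r k)\<^sup>2"
    by (simp only: Ek.simps power_mult_distrib power2_abs) (simp add: power2_eq_square)
  also have "\<dots> \<le> 4 * (real (Suc k))\<^sup>2 * \<bar>r\<bar>\<^sup>2 * (fact k * 2 ^ k * \<bar>r\<bar> ^ k)"
    using 3 by (intro mult_left_mono) auto
  also have "\<dots> \<le> fact (Suc (Suc k)) * 2 ^ Suc (Suc k) * \<bar>r\<bar> ^ Suc (Suc k)"
  proof -
    have "4 * (real (Suc k))\<^sup>2 * \<bar>r\<bar>\<^sup>2 * (fact k * 2 ^ k * \<bar>r\<bar> ^ k)
        = (real (Suc k)) * (real (Suc k) * fact k * 2 ^ k * \<bar>r\<bar> ^ k * \<bar>r\<bar>\<^sup>2 * 4)"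
      by (simp add: power2_eq_square algebra_simps)
    also have "\<dots> \<le> (real (Suc (Suc k))) * (real (Suc k) * fact k * 2 ^ k * \<bar>r\<bar> ^ k * \<bar>r\<bar>\<^sup>2 * 4)"
      by (intro mult_right_mono) auto
    also have "\<dots> = fact (Suc (Suc k)) * 2 ^ Suc (Suc k) * \<bar>r\<bar> ^ Suc (Suc k)"
    proof -
      have gen: "real (Suc (Suc k)) * (real (Suc k) * fact k * 2 ^ k * q ^ k * q\<^sup>2 * 4)
         = fact (Suc (Suc k)) * 2 ^ Suc (Suc k) * q ^ Suc (Suc k)" for q :: real
        by (simp add: power2_eq_square algebra_simps)
      show ?thesis by (rule gen)
    qed
    finally show ?thesis .
  qed
  finally show ?case .
qed

lemma cs_variant:
  fixes x u v :: "nat \<Rightarrow> real"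
  assumes "finite A" "\<And>j. j \<in> A \<Longrightarrow> 0 \<le> x j" "\<And>j. j \<in> A \<Longrightarrow> 0 \<le> u j" "\<And>j. j \<in> A \<Longrightarrow> 0 \<le> v j"
    "\<And>j. j \<in> A \<Longrightarrow> (x j)\<^sup>2 \<le> u j * v j"
  shows "(\<Sum>j\<in>A. x j)\<^sup>2 \<le> (\<Sum>j\<in>A. u j) * (\<Sum>j\<in>A. v j)"
proof -
  have "x j \<le> sqrt (u j) * sqrt (v j)" if "j \<in> A" for j
  proof -
    have "x j = sqrt ((x j)\<^sup>2)" using assms(2)[OF that] by simp
    also have "\<dots> \<le> sqrt (u j * v j)" using assms(5)[OF that] by (rule real_sqrt_le_mono)
    finally show ?thesis by (simp add: real_sqrt_mult)
  qed
  then have "(\<Sum>j\<in>A. x j) \<le> (\<Sum>j\<in>A. sqrt (u j) * sqrt (v j))" by (rule sum_mono)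
  then have "(\<Sum>j\<in>A. x j)\<^sup>2 \<le> (\<Sum>j\<in>A. sqrt (u j) * sqrt (v j))\<^sup>2"
    using assms(2) by (intro power_mono) (auto intro: sum_nonneg)
  also have "\<dots> \<le> (\<Sum>j\<in>A. (sqrt (u j))\<^sup>2) * (\<Sum>j\<in>A. (sqrt (v j))\<^sup>2)"
    by (rule Cauchy_Schwarz_ineq_sum)
  also have "\<dots> = (\<Sum>j\<in>A. u j) * (\<Sum>j\<in>A. v j)"
    using assms(3,4) by simp
  finally show ?thesis .
qed

lemma exp_partial: "0 \<le> y \<Longrightarrow> (\<Sum>j\<le>n. y ^ j / fact j) \<le> exp (y::real)"
proof -
  assume y: "0 \<le> y"
  have s: "summable (\<lambda>j. y ^ j / fact j)" using summable_exp[of y] by (simp add: field_simps)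
  have "(\<Sum>j\<le>n. y ^ j / fact j) = (\<Sum>j\<in>{..<Suc n}. y ^ j / fact j)"
    by (simp add: lessThan_Suc_atMost)
  also have "\<dots> \<le> (\<Sum>j. y ^ j / fact j)"
    using s y by (intro sum_le_suminf) auto
  also have "\<dots> = exp y" by (simp add: exp_def field_simps)
  finally show ?thesis .
qed

lemma Mc_bound:
  assumes e: "e > 0"
  shows "(Mc a r n)\<^sup>2 \<le> (\<bar>r\<bar> + e) ^ n * 2 ^ n * fact n * exp (2 * a\<^sup>2 / e)"
proof -
  define B where "B = 2 * a"
  define x where "x j = real (n choose j) * \<bar>B\<bar> ^ j * \<bar>Ek r (n - j)\<bar>" for j
  define u where "u j = real (n choose j) * e ^ j * \<bar>r\<bar> ^ (n - j)" for j
  define v where "v j = real (n choose j) * (B\<^sup>2) ^ j * fact (n - j) * 2 ^ (n - j) / e ^ j" for j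
  have "\<bar>Mc a r n\<bar> \<le> (\<Sum>j\<le>n. x j)"
    unfolding Mc_conv x_def B_def[symmetric]
    by (rule order_trans[OF sum_abs]) (simp add: abs_mult power_abs)
  then have "(Mc a r n)\<^sup>2 \<le> (\<Sum>j\<le>n. x j)\<^sup>2"
    by (metis abs_ge_zero power2_abs power_mono)
  also have "\<dots> \<le> (\<Sum>j\<le>n. u j) * (\<Sum>j\<le>n. v j)"
  proof (rule cs_variant)
    fix j assume "j \<in> {..n}"
    have "(x j)\<^sup>2 = (real (n choose j))\<^sup>2 * (B\<^sup>2) ^ j * (Ek r (n - j))\<^sup>2"
      unfolding x_def by (simp add: power_mult_distrib) (metis power2_abs power_mult mult.commute)
    also have "\<dots> \<le> (real (n choose j))\<^sup>2 * (B\<^sup>2) ^ j * (fact (n - j) * 2 ^ (n - j) * \<bar>r\<bar> ^ (n - j))"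
      by (intro mult_left_mono Ek_sq) auto
    also have "\<dots> = u j * v j"
      unfolding u_def v_def using e by (simp add: power2_eq_square field_simps)
    finally show "(x j)\<^sup>2 \<le> u j * v j" .
  qed (use e in \<open>auto simp: x_def u_def v_def\<close>)
  also have "(\<Sum>j\<le>n. u j) = (e + \<bar>r\<bar>) ^ n"
    unfolding u_def binomial_ring by (simp add: mult.assoc)
  also have "(\<Sum>j\<le>n. v j) = 2 ^ n * fact n * (\<Sum>j\<le>n. (B\<^sup>2 / (2 * e)) ^ j / fact j)"
    unfolding sum_distrib_left
  proof (intro sum.cong refl)
    fix j assume "j \<in> {..n}"
    then have j: "j \<le> n" by simp
    have c: "real (n choose j) * fact (n - j) = fact n / fact j"
      using j by (simp add: binomial_fact field_simps)
    have p: "(2::real) ^ (n - j) = 2 ^ n / 2 ^ j"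
      using j by (simp add: power_diff)
    show "v j = 2 ^ n * fact n * ((B\<^sup>2 / (2 * e)) ^ j / fact j)"
      unfolding v_def p using c e by (simp add: field_simps power_divide power_mult_distrib)
  qed
  also have "(\<Sum>j\<le>n. (B\<^sup>2 / (2 * e)) ^ j / fact j) \<le> exp (2 * a\<^sup>2 / e)"
  proof -
    have "B\<^sup>2 / (2 * e) = 2 * a\<^sup>2 / e" unfolding B_def using e by (simp add: power2_eq_square field_simps)
    then show ?thesis using exp_partial[of "B\<^sup>2 / (2 * e)" n] e by simp
  qed
  then have "(e + \<bar>r\<bar>) ^ n * (2 ^ n * fact n * (\<Sum>j\<le>n. (B\<^sup>2 / (2 * e)) ^ j / fact j))
      \<le> (e + \<bar>r\<bar>) ^ n * (2 ^ n * fact n * exp (2 * a\<^sup>2 / e))"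
    using e by (intro mult_left_mono) auto
  finally show ?thesis by (simp add: algebra_simps)
qed




lemma exponent_id:
  assumes s: "(s::real) > 0" and u: "u > 0" and us: "u = s + 1"
  shows "- (x\<^sup>2) / 2 + - ((x - \<mu>)\<^sup>2) / (2 * s) = - (\<mu>\<^sup>2) / (2 * u) + - ((x - \<mu> / u)\<^sup>2) / (2 * (s / u))"
proof -
  have 1: "x - \<mu>/u = (u * x - \<mu>) / u" using u by (simp add: field_simps)
  have 2: "((u * x - \<mu>) / u)\<^sup>2 / (2 * (s / u)) = (u * x - \<mu>)\<^sup>2 / (2 * s * u)"
    using s u by (simp add: power_divide power2_eq_square)
  have 3: "-(x\<^sup>2) / 2 - (x-\<mu>)\<^sup>2 / (2 * s) + (\<mu>\<^sup>2) / (2 * u) + (u * x - \<mu>)\<^sup>2 / (2 * s * u)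
     = (-(x\<^sup>2) * s * u - (x-\<mu>)\<^sup>2 * u + \<mu>\<^sup>2 * s + (u * x - \<mu>)\<^sup>2) / (2 * s * u)"
    using s u by (simp add: add_divide_distrib diff_divide_distrib)
  have 4: "-(x\<^sup>2) * s * u - (x-\<mu>)\<^sup>2 * u + \<mu>\<^sup>2 * s + (u * x - \<mu>)\<^sup>2 = 0"
    unfolding us power2_eq_square by algebra
  have "-(x\<^sup>2) / 2 - (x-\<mu>)\<^sup>2 / (2 * s) = -(\<mu>\<^sup>2) / (2 * u) - (x - \<mu>/u)\<^sup>2 / (2 * (s / u))"
    using 3 unfolding 1 2 4 by simp
  then show ?thesis by simp
qed

lemma pointwise:
  fixes \<sigma> \<mu> t x :: real
  assumes s: "\<sigma> > 0" and t: "t > 0" and t2: "t\<^sup>2 = \<sigma>\<^sup>2 / (\<sigma>\<^sup>2 + 1)"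
  shows "hermite_fun n x * gauss_density \<sigma> \<mu> x =
    exp (- (\<mu>\<^sup>2) / (2 * (\<sigma>\<^sup>2 + 1))) / (sqrt (\<sigma>\<^sup>2 + 1) * sqrt (sqrt pi * 2 ^ n * fact n))
    * (normal_density (\<mu> / (\<sigma>\<^sup>2 + 1)) t x * hermite n x)"
proof -
  define E where "E = exp (- (\<mu>\<^sup>2) / (2 * (\<sigma>\<^sup>2 + 1)))"
  define C where "C = exp (-(x - \<mu> / (\<sigma>\<^sup>2 + 1))\<^sup>2 / (2 * t\<^sup>2))"
  define cn where "cn = sqrt (sqrt pi * 2 ^ n * fact n)"
  have cn: "cn > 0" unfolding cn_def by simp
  have pos: "\<sigma>\<^sup>2 + 1 > 0" using zero_le_power2[of \<sigma>] by linarith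
  have e: "exp (- (x\<^sup>2) / 2) * exp (- ((x - \<mu>)\<^sup>2) / (2 * \<sigma>\<^sup>2)) = E * C"
    unfolding E_def C_def exp_add[symmetric] t2 using s pos
    by (intro arg_cong[where f=exp] exponent_id) auto
  have q: "sqrt (2 * pi * \<sigma>\<^sup>2) = sqrt (\<sigma>\<^sup>2 + 1) * sqrt (2 * pi * t\<^sup>2)"
    unfolding t2 real_sqrt_mult[symmetric] using pos by (simp add: field_simps)
  have "hermite_fun n x * gauss_density \<sigma> \<mu> x
     = (exp (- (x\<^sup>2) / 2) * exp (- ((x - \<mu>)\<^sup>2) / (2 * \<sigma>\<^sup>2))) * hermite n x / (cn * sqrt (2 * pi * \<sigma>\<^sup>2))"
    unfolding hermite_fun_def gauss_density_def cn_def by simp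
  also have "\<dots> = (E * C) * hermite n x / (cn * (sqrt (\<sigma>\<^sup>2 + 1) * sqrt (2 * pi * t\<^sup>2)))"
    by (simp only: e q)
  also have "\<dots> = E / (sqrt (\<sigma>\<^sup>2 + 1) * cn) * (1 / sqrt (2 * pi * t\<^sup>2) * C * hermite n x)"
    using cn pos t by (simp add: field_simps)
  finally show ?thesis unfolding E_def cn_def C_def normal_density_def by simp
qed


lemma key_bound:
  fixes \<sigma> \<mu> lam m r :: real and N n :: nat
  assumes s: "\<sigma> > 0"
    and m: "m = \<mu> / (\<sigma>\<^sup>2 + 1)" and r: "r = (\<sigma>\<^sup>2 - 1) / (\<sigma>\<^sup>2 + 1)"
    and lam: "lam = (if \<sigma>^2 \<noteq> 1 then ln \<bar>(\<sigma>^2 + 1) / (\<sigma>^2 - 1)\<bar> / 4 else 1/4)"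
    and N1: "N \<ge> 1"
    and NB: "real N \<ge> (if \<sigma>^2 \<noteq> 1
            then 32 * \<mu>^2 / \<bar>\<sigma>^4 - 1\<bar> * (ln \<bar>(\<sigma>^2 + 1) / (\<sigma>^2 - 1)\<bar>) powi (-2)
            else exp (3/2) * \<mu>^2 / 2)"
    and n: "n \<ge> N"
  shows "(Mc m r n)\<^sup>2 \<le> 2 ^ n * fact n * exp (- 2 * lam * real n)"
proof -
  have pos: "\<sigma>\<^sup>2 + 1 > 0" using zero_le_power2[of \<sigma>] by linarith
  have nN: "real n \<ge> real N" using n by simp
  show ?thesis
  proof (cases "\<sigma>^2 = 1")
    case True
    have r0: "r = 0" using True r by simp
    have l: "lam = 1/4" using True lam by simp
    have m2: "m = \<mu> / 2" using True m by simp
    have NB': "real N \<ge> exp (3/2) * \<mu>^2 / 2" using True NB by simp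
    show ?thesis
    proof (cases "\<mu> = 0")
      case True
      have "(Mc m r n)\<^sup>2 \<le> (\<bar>r\<bar> + exp (-1/2)) ^ n * 2 ^ n * fact n * exp (2 * m\<^sup>2 / exp (-1/2))"
        by (rule Mc_bound) simp
      also have "\<dots> = exp (-1/2) ^ n * 2 ^ n * fact n" using True r0 m2 by simp
      also have "exp (-1/2) ^ n = exp (- 2 * lam * real n)"
        unfolding l exp_of_nat_mult[symmetric] by (simp add: field_simps)
      finally show ?thesis by (simp add: mult_ac)
    next
      case False
      have npos: "real n > 0" using n N1 by simp
      define e where "e = 2 * m\<^sup>2 / real n"
      have epos: "e > 0" unfolding e_def using False npos m2 by simp
      have "(Mc m r n)\<^sup>2 \<le> (\<bar>r\<bar> + e) ^ n * 2 ^ n * fact n * exp (2 * m\<^sup>2 / e)"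
        by (rule Mc_bound[OF epos])
      also have "2 * m\<^sup>2 / e = real n" unfolding e_def using npos False m2 by (simp add: field_simps)
      also have "(\<bar>r\<bar> + e) ^ n * 2 ^ n * fact n * exp (real n) = (e * exp 1) ^ n * (2 ^ n * fact n)"
      proof -
        have ex: "exp (real n) = exp 1 ^ n" using exp_of_nat_mult[of n "1::real"] by simp
        show ?thesis unfolding r0 ex by (simp add: power_mult_distrib mult_ac)
      qed
      also have "\<dots> \<le> exp (-1/2) ^ n * (2 ^ n * fact n)"
      proof (intro mult_right_mono power_mono)
        have "e * exp 1 = (\<mu>\<^sup>2 / 2) * exp 1 / real n" unfolding e_def m2 by (simp add: power_divide)
        also have "\<dots> \<le> exp (-1/2)"
        proof -
          have "(\<mu>\<^sup>2 / 2) * exp 1 = (exp (3/2) * \<mu>\<^sup>2 / 2) * exp (-1/2)"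
          proof -
            have "exp (- (1 / 2)) * exp (3 / 2) = (exp 1 :: real)" by (simp add: mult_exp_exp)
            then show ?thesis by (simp add: field_simps)
          qed
          also have "\<dots> \<le> real n * exp (-1/2)" using NB' nN by (intro mult_right_mono) auto
          finally show ?thesis using npos by (simp add: field_simps)
        qed
        finally show "e * exp 1 \<le> exp (-1/2)" .
      qed (use epos in auto)
      also have "exp (-1/2) ^ n = exp (- 2 * lam * real n)"
        unfolding l exp_of_nat_mult[symmetric] by (simp add: field_simps)
      finally show ?thesis by (simp add: mult_ac)
    qed
  next
    case False
    define L where "L = ln \<bar>(\<sigma>^2 + 1) / (\<sigma>^2 - 1)\<bar>"
    have l: "lam = L / 4" using False lam L_def by simp
    have d: "\<sigma>^2 - 1 \<noteq> 0" using False by simp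
    have rpos: "\<bar>r\<bar> > 0" using r d pos by simp
    have rinv: "\<bar>(\<sigma>^2 + 1) / (\<sigma>^2 - 1)\<bar> = 1 / \<bar>r\<bar>" using r by simp
    have rlt: "\<bar>r\<bar> < 1"
      unfolding r using pos s by (simp add: abs_less_iff field_simps)
    have L: "L = - ln \<bar>r\<bar>" unfolding L_def rinv using rpos by (simp add: ln_div)
    have Lpos: "L > 0" unfolding L using rpos rlt by simp
    have lpos: "lam > 0" using l Lpos by simp
    have rexp: "\<bar>r\<bar> = exp (- 4 * lam)" using l L rpos by simp
    have s4: "\<bar>\<sigma>^4 - 1\<bar> = \<bar>\<sigma>^2 - 1\<bar> * (\<sigma>^2 + 1)"
    proof -
      have "\<sigma>^4 - 1 = (\<sigma>^2 - 1) * (\<sigma>^2 + 1)" by (simp add: algebra_simps power2_eq_square power4_eq_xxxx)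
      then show ?thesis using pos by (simp add: abs_mult)
    qed
    have NB': "real N \<ge> 32 * \<mu>^2 / \<bar>\<sigma>^4 - 1\<bar> * (1 / L\<^sup>2)"
      using False NB unfolding L_def by (simp add: power_int_minus_divide)
    have mr: "m\<^sup>2 / \<bar>r\<bar> = \<mu>^2 / \<bar>\<sigma>^4 - 1\<bar>"
    proof -
      have gen: "(\<mu> / a)\<^sup>2 / (b / a) = \<mu>^2 / (b * a)" if "a > 0" "b > 0" for a b :: real
        using that by (simp add: power2_eq_square field_simps)
      have ra: "\<bar>r\<bar> = \<bar>\<sigma>^2 - 1\<bar> / (\<sigma>^2 + 1)" unfolding r using pos by (simp add: abs_divide)
      show ?thesis unfolding m ra s4 by (rule gen) (use pos d in auto)
    qed
    have NB2: "real n \<ge> 2 * m\<^sup>2 / (\<bar>r\<bar> * lam\<^sup>2)"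
    proof -
      have L4: "L = 4 * lam" using l by simp
      have "2 * m\<^sup>2 / (\<bar>r\<bar> * lam\<^sup>2) = 2 * (m\<^sup>2 / \<bar>r\<bar>) / lam\<^sup>2" using rpos by (simp add: field_simps)
      also have "\<dots> = 32 * (\<mu>^2 / \<bar>\<sigma>^4 - 1\<bar>) * (1 / L\<^sup>2)"
        unfolding mr L4 using lpos by (simp add: power2_eq_square)
      finally have "2 * m\<^sup>2 / (\<bar>r\<bar> * lam\<^sup>2) = 32 * \<mu>^2 / \<bar>\<sigma>^4 - 1\<bar> * (1 / L\<^sup>2)" by simp
      then show ?thesis using NB' nN by linarith
    qed
    define e where "e = \<bar>r\<bar> * lam"
    have epos: "e > 0" unfolding e_def using rpos lpos by simp
    have "(Mc m r n)\<^sup>2 \<le> (\<bar>r\<bar> + e) ^ n * 2 ^ n * fact n * exp (2 * m\<^sup>2 / e)"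
      by (rule Mc_bound[OF epos])
    also have "\<dots> \<le> exp (- 3 * lam) ^ n * 2 ^ n * fact n * exp (lam * real n)"
    proof (intro mult_mono power_mono)
      have "\<bar>r\<bar> + e = \<bar>r\<bar> * (1 + lam)" unfolding e_def by (simp add: algebra_simps)
      also have "\<dots> \<le> exp (- 4 * lam) * exp lam"
        unfolding rexp by (intro mult_left_mono exp_ge_add_one_self) auto
      also have "\<dots> = exp (- 3 * lam)" by (simp add: mult_exp_exp)
      finally show "\<bar>r\<bar> + e \<le> exp (- 3 * lam)" .
      have "2 * m\<^sup>2 / e = (2 * m\<^sup>2 / (\<bar>r\<bar> * lam\<^sup>2)) * lam"
        unfolding e_def using rpos lpos by (simp add: field_simps power2_eq_square)
      also have "\<dots> \<le> real n * lam" using NB2 lpos by (intro mult_right_mono) auto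
      finally show "exp (2 * m\<^sup>2 / e) \<le> exp (lam * real n)" by (simp add: mult.commute)
    qed (use epos in auto)
    also have "exp (- 3 * lam) ^ n * 2 ^ n * fact n * exp (lam * real n) = 2 ^ n * fact n * exp (- 2 * lam * real n)"
    proof -
      have "exp (- 3 * lam) ^ n = exp (real n * (- 3 * lam))" by (simp only: exp_of_nat_mult)
      then have "exp (- 3 * lam) ^ n * exp (lam * real n) = exp (- 2 * lam * real n)"
        by (simp add: mult_exp_exp algebra_simps)
      then show ?thesis by (simp add: mult_ac)
    qed
    finally show ?thesis .
  qed
qed


theorem lemma4p9:
  fixes \<sigma> \<mu> :: real and N :: nat and \<alpha> :: "nat \<Rightarrow> real" and lam :: real
  assumes "\<sigma> > 0"
    and "\<And>n. \<alpha> n = (LBINT x. hermite_fun n x * gauss_density \<sigma> \<mu> x)"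
    and "lam = (if \<sigma>^2 \<noteq> 1 then ln \<bar>(\<sigma>^2 + 1) / (\<sigma>^2 - 1)\<bar> / 4 else 1/4)"
    and "N \<ge> 1"
    and "real N \<ge> (if \<sigma>^2 \<noteq> 1
            then 32 * \<mu>^2 / \<bar>\<sigma>^4 - 1\<bar> * (ln \<bar>(\<sigma>^2 + 1) / (\<sigma>^2 - 1)\<bar>) powi (-2)
            else exp (3/2) * \<mu>^2 / 2)"
  shows "sqrt (\<Sum>n. (\<alpha> (n + N))^2)
           \<le> exp (- (\<mu>^2) / (2 * (\<sigma>^2 + 1)) - lam * real N)
              / (pi powr (1/4) * sqrt ((\<sigma>^2 + 1) * (1 - exp (- 2 * lam))))"
proof -
  note s = assms(1)
  have pos: "\<sigma>\<^sup>2 + 1 > 0" using zero_le_power2[of \<sigma>] by linarith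
  define m where "m = \<mu> / (\<sigma>\<^sup>2 + 1)"
  define t where "t = \<sigma> / sqrt (\<sigma>\<^sup>2 + 1)"
  have t: "t > 0" unfolding t_def using s pos by simp
  have t2: "t\<^sup>2 = \<sigma>\<^sup>2 / (\<sigma>\<^sup>2 + 1)" unfolding t_def using pos by (simp add: power_divide)
  define r where "r = (\<sigma>\<^sup>2 - 1) / (\<sigma>\<^sup>2 + 1)"
  have r: "2 * t\<^sup>2 - 1 = r" unfolding t2 r_def using pos by (simp add: field_simps)
  have MiMc2: "Mi m t n = Mc m r n \<and> Mi m t (Suc n) = Mc m r (Suc n)" for n
  proof (induction n)
    case 0 then show ?case using Mi_0[OF t, of m] Mi_1[OF t, of m] by simp
  next
    case (Suc n) then show ?case using Mi_rec[OF t, of m n] r by simp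
  qed
  have MiMc: "Mi m t n = Mc m r n" for n using MiMc2 by blast
  define E where "E = exp (- (\<mu>\<^sup>2) / (2 * (\<sigma>\<^sup>2 + 1)))"
  define K2 where "K2 = exp (- (\<mu>\<^sup>2) / (\<sigma>\<^sup>2 + 1)) / ((\<sigma>\<^sup>2 + 1) * sqrt pi)"
  have K2pos: "K2 > 0" unfolding K2_def using pos by simp
  have alpha: "\<alpha> n = E / (sqrt (\<sigma>\<^sup>2 + 1) * sqrt (sqrt pi * 2 ^ n * fact n)) * Mc m r n" for n
  proof -
    have "\<alpha> n = (LBINT x. E / (sqrt (\<sigma>\<^sup>2 + 1) * sqrt (sqrt pi * 2 ^ n * fact n))
        * (normal_density m t x * hermite n x))"
      unfolding assms(2) pointwise[OF s t t2] E_def m_def ..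
    also have "\<dots> = E / (sqrt (\<sigma>\<^sup>2 + 1) * sqrt (sqrt pi * 2 ^ n * fact n)) * Mi m t n"
      unfolding integral_mult_right_zero Mi_def[OF t] ..
    finally show ?thesis unfolding MiMc .
  qed
  have E2: "E\<^sup>2 = exp (- (\<mu>\<^sup>2) / (\<sigma>\<^sup>2 + 1))"
  proof -
    have g: "2 * (- a / (2 * b)) = - a / b" for a b :: real
      by (cases "b = 0") (simp_all add: field_simps)
    show ?thesis unfolding E_def exp_double[symmetric] g ..
  qed
  have alpha_sq: "(\<alpha> n)\<^sup>2 = K2 * (Mc m r n)\<^sup>2 / (2 ^ n * fact n)" for n
  proof -
    have "(\<alpha> n)\<^sup>2 = E\<^sup>2 / ((\<sigma>\<^sup>2 + 1) * (sqrt pi * 2 ^ n * fact n)) * (Mc m r n)\<^sup>2"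
      unfolding alpha using pos by (simp add: power_mult_distrib power_divide)
    then show ?thesis unfolding E2 K2_def by (simp add: field_simps)
  qed
  have lpos: "lam > 0"
  proof (cases "\<sigma>^2 = 1")
    case True then show ?thesis using assms(3) by simp
  next
    case False
    have d: "\<sigma>^2 - 1 \<noteq> 0" using False by simp
    have "\<bar>(\<sigma>^2 + 1) / (\<sigma>^2 - 1)\<bar> > 1"
    proof -
      have b: "\<bar>\<sigma>^2 - 1\<bar> > 0" using d by simp
      have s2: "\<sigma>^2 > 0" using s by simp
      have ab: "\<bar>\<sigma>^2 - 1\<bar> < \<sigma>^2 + 1" using s2 by (simp add: abs_less_iff)
      have "\<bar>(\<sigma>^2 + 1) / (\<sigma>^2 - 1)\<bar> = (\<sigma>^2 + 1) / \<bar>\<sigma>^2 - 1\<bar>"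
        using pos by (simp add: abs_divide)
      also have "\<dots> > 1" using b ab by (simp add: less_divide_eq)
      finally show ?thesis .
    qed
    then have "ln \<bar>(\<sigma>^2 + 1) / (\<sigma>^2 - 1)\<bar> > 0" by (rule ln_gt_zero)
    then show ?thesis using False assms(3) by simp
  qed
  have bnd: "(\<alpha> (n + N))\<^sup>2 \<le> K2 * exp (- 2 * lam * real N) * exp (- 2 * lam) ^ n" for n
  proof -
    have kb: "(Mc m r (n + N))\<^sup>2 \<le> 2 ^ (n + N) * fact (n + N) * exp (- 2 * lam * real (n + N))"
      by (rule key_bound[OF s m_def r_def[unfolded power2_eq_square[symmetric]] assms(3,4,5)])
         (simp_all add: power2_eq_square)
    have "(\<alpha> (n + N))\<^sup>2 = K2 * ((Mc m r (n + N))\<^sup>2 / (2 ^ (n + N) * fact (n + N)))"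
      unfolding alpha_sq by simp
    also have "\<dots> \<le> K2 * exp (- 2 * lam * real (n + N))"
      using kb K2pos by (intro mult_left_mono) (auto simp: divide_le_eq mult_ac)
    also have "exp (- 2 * lam * real (n + N)) = exp (- 2 * lam * real N) * exp (- 2 * lam) ^ n"
    proof -
      have "- 2 * lam * real (n + N) = - 2 * lam * real N + real n * (- 2 * lam)" by (simp add: algebra_simps)
      then show ?thesis by (simp only: exp_add exp_of_nat_mult)
    qed
    finally show ?thesis by (simp add: mult_ac)
  qed
  define q where "q = exp (- 2 * lam)"
  have q: "q < 1" "q > 0" unfolding q_def using lpos by auto
  have gs: "(\<lambda>n. K2 * exp (- 2 * lam * real N) * q ^ n) sums (K2 * exp (- 2 * lam * real N) * (1 / (1 - q)))"
    by (intro sums_mult geometric_sums) (use q in auto)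
  have summ: "summable (\<lambda>n. (\<alpha> (n + N))\<^sup>2)"
    by (rule summable_comparison_test[OF _ sums_summable[OF gs]]) (use bnd q_def in auto)
  have S: "(\<Sum>n. (\<alpha> (n + N))\<^sup>2) \<le> K2 * exp (- 2 * lam * real N) * (1 / (1 - q))"
    using suminf_le[OF _ summ sums_summable[OF gs]] bnd sums_unique[OF gs] unfolding q_def by auto
  define R where "R = exp (- (\<mu>^2) / (2 * (\<sigma>^2 + 1)) - lam * real N)
              / (pi powr (1/4) * sqrt ((\<sigma>^2 + 1) * (1 - exp (- 2 * lam))))"
  have Rpos: "R \<ge> 0" unfolding R_def using q pos unfolding q_def by simp
  have pp: "(pi powr (1/4))\<^sup>2 = sqrt pi"
  proof -
    have "(pi powr (1/4))\<^sup>2 = pi powr (1/4 + 1/4)" unfolding power2_eq_square powr_add ..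
    also have "\<dots> = pi powr (1/2)" by simp
    also have "\<dots> = sqrt pi" by (simp add: powr_half_sqrt)
    finally show ?thesis .
  qed
  have R2: "R\<^sup>2 = K2 * exp (- 2 * lam * real N) * (1 / (1 - q))"
  proof -
    have ex: "(exp (- (\<mu>^2) / (2 * (\<sigma>^2 + 1)) - lam * real N))\<^sup>2 = exp (- (\<mu>\<^sup>2) / (\<sigma>\<^sup>2 + 1)) * exp (- 2 * lam * real N)"
    proof -
      have g: "2 * (- a / (2 * b) - c) = - a / b + - 2 * c" for a b c :: real
        by (cases "b = 0") (simp_all add: field_simps)
      show ?thesis unfolding exp_double[symmetric] g exp_add by (simp add: mult.assoc)
    qed
    have "R\<^sup>2 = exp (- (\<mu>\<^sup>2) / (\<sigma>\<^sup>2 + 1)) * exp (- 2 * lam * real N) / (sqrt pi * ((\<sigma>^2 + 1) * (1 - q)))"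
      unfolding R_def power_divide power_mult_distrib ex pp q_def using q pos unfolding q_def by simp
    then show ?thesis unfolding K2_def using q pos by (simp add: field_simps)
  qed
  have "sqrt (\<Sum>n. (\<alpha> (n + N))^2) \<le> sqrt (R\<^sup>2)"
    using S R2 by (intro real_sqrt_le_mono) simp
  also have "\<dots> = R" using Rpos by simp
  finally show ?thesis unfolding R_def .
qed


end
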